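(* Let $(\mathcal{O},g,f)$ be an oriented matroid program and let $\mathcal{O}'=\mathcal{O}\cup p$ be a nontrivial single-element extension of $\mathcal{O}$. Let $X,Y$ be old, conformal, comodular cocircuits of $\mathcal{O}'$ with $X_g=Y_g=+$. Then $X\setminus p$ and $Y\setminus p$ are conformal cocircuits of $\mathcal{O}$ with $(X\setminus p)_g=(Y\setminus p)_g=+$. Moreover, $X\setminus p$ and $Y\setminus p$ are comodular in $\mathcal{O}$ if $(X\circ Y)_p\neq 0$ or if $\mathcal{O}\cup p$ is a principal extension.
   Context: Oriented matroid $\mathcal{O}$ of rank $r$ on finite $E$, given by its cocircuits (sign vectors in $\{+,-,0\}^E$), underlying matroid $\mathcal{M}(\mathcal{O})$. Notation: $z(X)$ zero set, $\operatorname{sep}(X,Y)=\{e:X_e=-Y_e\ne0\}$, $(X\circ Y)_e=X_e$ if $X_e\ne0$, else $Y_e$; conformal means $\operatorname{sep}=\emptyset$. An edge is a covector whose zero set is a flat of rank $r-2$; cocircuits $X\ne\pm Y$ are comodular if $X\circ Y$ is an edge. An oriented matroid program $(\mathcal{O},g,f)$: $g\neq f\in E$, $g$ not a loop, $f$ not a coloop. A single-element extension $\mathcal{O}'=\mathcal{O}\cup p$ is determined by a localization $\sigma$ from cocircuits of $\mathcal{O}$ to $\{+,-,0\}$; its cocircuits are the old cocircuits $(Y,\sigma(Y))$, $Y$ a cocircuit of $\mathcal{O}$, and the new cocircuits $(Y^1\circ Y^2,0)$ with $Y^1,Y^2$ conformal comodular cocircuits of $\mathcal{O}$ with $\sigma(Y^1)=-\sigma(Y^2)\ne0$.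 $X\setminus p$ denotes restriction to $E$. The extension is nontrivial if $p$ is not a coloop. It is principal if there is a flat $A$ of $\mathcal{M}(\mathcal{O})$ such that for every flat $F$ of $\mathcal{M}(\mathcal{O})$, $p\in\operatorname{cl}_{\mathcal{M}(\mathcal{O}')}(F)$ iff $A\subseteq F$. *)

theory Defs
  imports Main
begin

datatype sign = Pos | Neg | Zer

fun negsign :: "sign \<Rightarrow> sign" where
  "negsign Pos = Neg" | "negsign Neg = Pos" | "negsign Zer = Zer"

type_synonym 'a signvec = "'a \<Rightarrow> sign"

text \<open>Sign vectors are total functions; those of an oriented matroid on E are Zer outside E.\<close>

definition zerovec :: "'a signvec" where "zerovec = (\<lambda>_. Zer)"

definition negv :: "'a signvec \<Rightarrow> 'a signvec" where
  "negv X = (\<lambda>e. negsign (X e))"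

definition supp :: "'a signvec \<Rightarrow> 'a set" where
  "supp X = {e. X e \<noteq> Zer}"

definition zset :: "'a set \<Rightarrow> 'a signvec \<Rightarrow> 'a set" where
  "zset E X = {e \<in> E. X e = Zer}"

definition sep :: "'a signvec \<Rightarrow> 'a signvec \<Rightarrow> 'a set" where
  "sep X Y = {e. X e \<noteq> Zer \<and> X e = negsign (Y e)}"

definition comp :: "'a signvec \<Rightarrow> 'a signvec \<Rightarrow> 'a signvec" where
  "comp X Y = (\<lambda>e. if X e \<noteq> Zer then X e else Y e)"

definition conformal :: "'a signvec \<Rightarrow> 'a signvec \<Rightarrow> bool" where
  "conformal X Y \<longleftrightarrow> sep X Y = {}"

text \<open>Restriction to E when p is removed: X \ p.\<close>
definition delp :: "'a \<Rightarrow> 'a signvec \<Rightarrow> 'a signvec" where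
  "delp p X = X(p := Zer)"

definition is_OM :: "'a set \<Rightarrow> 'a signvec set \<Rightarrow> bool" where
  "is_OM E C \<longleftrightarrow>
     finite E \<and>
     (\<forall>X\<in>C. supp X \<subseteq> E) \<and>
     zerovec \<notin> C \<and>
     (\<forall>X\<in>C. negv X \<in> C) \<and>
     (\<forall>X\<in>C. \<forall>Y\<in>C. supp X \<subseteq> supp Y \<longrightarrow> X = Y \<or> X = negv Y) \<and>
     (\<forall>X\<in>C. \<forall>Y\<in>C. \<forall>e. X \<noteq> negv Y \<and> e \<in> sep X Y \<longrightarrow>
        (\<exists>Z\<in>C. Z e = Zer \<and>
           (\<forall>f. Z f = Pos \<longrightarrow> X f = Pos \<or> Y f = Pos) \<and>
           (\<forall>f. Z f = Neg \<longrightarrow> X f = Neg \<or> Y f = Neg)))"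

inductive_set covectors :: "'a signvec set \<Rightarrow> 'a signvec set" for C where
  cov_zero: "zerovec \<in> covectors C"
| cov_comp: "X \<in> C \<Longrightarrow> V \<in> covectors C \<Longrightarrow> comp X V \<in> covectors C"

definition hyperplanes :: "'a set \<Rightarrow> 'a signvec set \<Rightarrow> 'a set set" where
  "hyperplanes E C = {zset E X | X. X \<in> C}"

definition mcl :: "'a set \<Rightarrow> 'a signvec set \<Rightarrow> 'a set \<Rightarrow> 'a set" where
  "mcl E C A = {e \<in> E. \<forall>H \<in> hyperplanes E C. A \<subseteq> H \<longrightarrow> e \<in> H}"

definition mindep :: "'a set \<Rightarrow> 'a signvec set \<Rightarrow> 'a set \<Rightarrow> bool" where
  "mindep E C I \<longleftrightarrow> I \<subseteq> E \<and> (\<forall>e\<in>I. e \<notin> mcl E C (I - {e}))"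

definition mrank :: "'a set \<Rightarrow> 'a signvec set \<Rightarrow> 'a set \<Rightarrow> nat" where
  "mrank E C A = Max {card I | I. I \<subseteq> A \<and> mindep E C I}"

definition om_rank :: "'a set \<Rightarrow> 'a signvec set \<Rightarrow> nat" where
  "om_rank E C = mrank E C E"

definition is_flat :: "'a set \<Rightarrow> 'a signvec set \<Rightarrow> 'a set \<Rightarrow> bool" where
  "is_flat E C F \<longleftrightarrow> F \<subseteq> E \<and> mcl E C F = F"

definition is_loop :: "'a set \<Rightarrow> 'a signvec set \<Rightarrow> 'a \<Rightarrow> bool" where
  "is_loop E C e \<longleftrightarrow> e \<in> mcl E C {}"

definition is_coloop :: "'a set \<Rightarrow> 'a signvec set \<Rightarrow> 'a \<Rightarrow> bool" where
  "is_coloop E C e \<longleftrightarrow> e \<in> E \<and> e \<notin> mcl E C (E - {e})"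

definition is_edge :: "'a set \<Rightarrow> 'a signvec set \<Rightarrow> 'a signvec \<Rightarrow> bool" where
  "is_edge E C V \<longleftrightarrow> V \<in> covectors C \<and> is_flat E C (zset E V) \<and>
     int (mrank E C (zset E V)) = int (om_rank E C) - 2"

definition comodular :: "'a set \<Rightarrow> 'a signvec set \<Rightarrow> 'a signvec \<Rightarrow> 'a signvec \<Rightarrow> bool" where
  "comodular E C X Y \<longleftrightarrow> X \<in> C \<and> Y \<in> C \<and> X \<noteq> Y \<and> X \<noteq> negv Y \<and> is_edge E C (comp X Y)"

definition om_program :: "'a set \<Rightarrow> 'a signvec set \<Rightarrow> 'a \<Rightarrow> 'a \<Rightarrow> bool" where
  "om_program E C g f \<longleftrightarrow> is_OM E C \<and> g \<in> E \<and> f \<in> E \<and> g \<noteq> f \<and>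
     \<not> is_loop E C g \<and> \<not> is_coloop E C f"

definition deletion_cocircuits :: "'a \<Rightarrow> 'a signvec set \<Rightarrow> 'a signvec set" where
  "deletion_cocircuits p C' =
     {V \<in> delp p ` C'. V \<noteq> zerovec \<and>
        (\<forall>W \<in> delp p ` C'. W \<noteq> zerovec \<longrightarrow> supp W \<subseteq> supp V \<longrightarrow> supp W = supp V)}"

definition single_elem_ext :: "'a set \<Rightarrow> 'a signvec set \<Rightarrow> 'a \<Rightarrow> 'a signvec set \<Rightarrow> bool" where
  "single_elem_ext E C p C' \<longleftrightarrow> p \<notin> E \<and> is_OM (insert p E) C' \<and> deletion_cocircuits p C' = C"

text \<open>Old cocircuits of O' are those of the form (Y, sigma(Y)), i.e. whose restriction is a cocircuit of O.\<close>
definition old_cocircuit :: "'a signvec set \<Rightarrow> 'a \<Rightarrow> 'a signvec set \<Rightarrow> 'a signvec \<Rightarrow> bool" where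
  "old_cocircuit C p C' X \<longleftrightarrow> X \<in> C' \<and> delp p X \<in> C"

definition principal_ext :: "'a set \<Rightarrow> 'a signvec set \<Rightarrow> 'a \<Rightarrow> 'a signvec set \<Rightarrow> bool" where
  "principal_ext E C p C' \<longleftrightarrow>
     (\<exists>A. is_flat E C A \<and>
        (\<forall>F. is_flat E C F \<longrightarrow> (p \<in> mcl (insert p E) C' F \<longleftrightarrow> A \<subseteq> F)))"

end

theory Submission imports Defs begin

lemma OM_fin: "is_OM S C \<Longrightarrow> finite S"
  unfolding is_OM_def by (elim conjE)

lemma OM_sub: "is_OM S C \<Longrightarrow> X \<in> C \<Longrightarrow> supp X \<subseteq> S"
  unfolding is_OM_def by (elim conjE) blast

lemma OM_zero: "is_OM S C \<Longrightarrow> zerovec \<notin> C"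
  unfolding is_OM_def by (elim conjE)

lemma OM_neg: "is_OM S C \<Longrightarrow> X \<in> C \<Longrightarrow> negv X \<in> C"
  unfolding is_OM_def by (elim conjE) blast

lemma OM_pm: "is_OM S C \<Longrightarrow> X \<in> C \<Longrightarrow> Y \<in> C \<Longrightarrow> supp X \<subseteq> supp Y \<Longrightarrow> X = Y \<or> X = negv Y"
  unfolding is_OM_def by (elim conjE) blast

lemma supp_delp: "supp (delp p X) = supp X - {p}"
  by (auto simp: supp_def delp_def)

lemma supp_negv: "supp (negv X) = supp X"
  by (auto simp: supp_def negv_def elim: negsign.elims)

lemma supp_empty_iff: "supp X = {} \<longleftrightarrow> X = zerovec"
  by (auto simp: supp_def zerovec_def)

lemma zset_eq: "supp X \<subseteq> S \<Longrightarrow> zset S X = S - supp X"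
  by (auto simp: supp_def zset_def)

lemma OM_incomp:
  assumes "is_OM S C" "X \<in> C" "Y \<in> C" "supp X \<subseteq> supp Y"
  shows "supp X = supp Y"
proof -
  have "X = Y \<or> X = negv Y" using OM_pm[OF assms] .
  thus ?thesis
  proof
    assume "X = negv Y" thus ?thesis by (simp add: supp_negv)
  qed simp
qed

lemma OM_weak:
  assumes om: "is_OM S C" and XC: "X \<in> C" and YC: "Y \<in> C" and ne: "supp X \<noteq> supp Y"
    and x1: "x \<in> supp X" and x2: "x \<in> supp Y"
  shows "\<exists>Z\<in>C. supp Z \<subseteq> supp X \<union> supp Y - {x}"
proof -
  have elim: "\<And>X Y e. X\<in>C \<Longrightarrow> Y\<in>C \<Longrightarrow> X \<noteq> negv Y \<Longrightarrow> e \<in> sep X Y \<Longrightarrow>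
        (\<exists>Z\<in>C. Z e = Zer \<and>
           (\<forall>f. Z f = Pos \<longrightarrow> X f = Pos \<or> Y f = Pos) \<and>
           (\<forall>f. Z f = Neg \<longrightarrow> X f = Neg \<or> Y f = Neg))"
    using om unfolding is_OM_def by blast
  have neg: "negv Y \<in> C" using OM_neg[OF om YC] .
  obtain Y' where Y': "Y' \<in> C" "supp Y' = supp Y" "x \<in> sep X Y'"
  proof (cases "X x = negsign (Y x)")
    case True thus ?thesis using that[of Y] YC x1 by (auto simp: sep_def supp_def)
  next
    case False
    hence "X x = Y x" using x1 x2 by (cases "X x"; cases "Y x") (auto simp: supp_def)
    hence "x \<in> sep X (negv Y)" using x1 by (cases "X x") (auto simp: sep_def supp_def negv_def)
    thus ?thesis by (rule that[OF neg supp_negv])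
  qed
  have "X \<noteq> negv Y'" using ne Y'(2) supp_negv by metis
  then obtain Z where Z: "Z\<in>C" "Z x = Zer" "\<forall>f. Z f = Pos \<longrightarrow> X f = Pos \<or> Y' f = Pos"
    "\<forall>f. Z f = Neg \<longrightarrow> X f = Neg \<or> Y' f = Neg" using elim[OF XC Y'(1) _ Y'(3)] by blast
  have "supp Z \<subseteq> supp X \<union> supp Y' - {x}"
  proof
    fix f assume "f \<in> supp Z"
    thus "f \<in> supp X \<union> supp Y' - {x}" using Z by (cases "Z f") (auto simp: supp_def)
  qed
  thus ?thesis using Z(1) Y'(2) by auto
qed

lemma abstract_strong:
  assumes fin: "finite S" and sub: "\<forall>D\<in>DD. D \<subseteq> S"
    and inc: "\<forall>D1\<in>DD. \<forall>D2\<in>DD. D1 \<subseteq> D2 \<longrightarrow> D1 = D2"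
    and weak: "\<forall>D1\<in>DD. \<forall>D2\<in>DD. \<forall>x. D1 \<noteq> D2 \<and> x \<in> D1 \<and> x \<in> D2 \<longrightarrow> (\<exists>D3\<in>DD. D3 \<subseteq> D1 \<union> D2 - {x})"
  shows "D1 \<in> DD \<Longrightarrow> D2 \<in> DD \<Longrightarrow> x \<in> D1 \<Longrightarrow> x \<in> D2 \<Longrightarrow> y \<in> D1 \<Longrightarrow> y \<notin> D2 \<Longrightarrow>
     \<exists>D3\<in>DD. y \<in> D3 \<and> x \<notin> D3 \<and> D3 \<subseteq> D1 \<union> D2"
proof (induction "card (D1 \<union> D2)" arbitrary: D1 D2 x y rule: less_induct)
  case less
  have finU: "finite (D1 \<union> D2)" using sub less.prems fin by (meson finite_subset le_sup_iff)
  have "D1 \<noteq> D2" using less.prems by blast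
  then obtain D3 where D3: "D3 \<in> DD" "D3 \<subseteq> D1 \<union> D2 - {x}" using weak less.prems by blast
  show ?case
  proof (cases "y \<in> D3")
    case True thus ?thesis using D3 by blast
  next
    case False
    have "\<not> D3 \<subseteq> D1" using inc D3 less.prems by blast
    then obtain g where g: "g \<in> D3" "g \<notin> D1" by blast
    hence gD2: "g \<in> D2" using D3 by blast
    have c1: "card (D2 \<union> D3) < card (D1 \<union> D2)"
      by (rule psubset_card_mono[OF finU]) (use D3 less.prems False in blast)
    obtain D4 where D4: "D4 \<in> DD" "x \<in> D4" "g \<notin> D4" "D4 \<subseteq> D2 \<union> D3"
      using less.hyps[OF c1 less.prems(2) D3(1) gD2 g(1) less.prems(4)] D3 by blast
    have c2: "card (D1 \<union> D4) < card (D1 \<union> D2)"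
      by (rule psubset_card_mono[OF finU]) (use D3 D4 g gD2 in blast)
    have yD4: "y \<notin> D4" using D4 False less.prems by blast
    obtain D5 where D5: "D5 \<in> DD" "y \<in> D5" "x \<notin> D5" "D5 \<subseteq> D1 \<union> D4"
      using less.hyps[OF c2 less.prems(1) D4(1) less.prems(3) D4(2) less.prems(5) yD4] by blast
    thus ?thesis using D4 D3 by blast
  qed
qed

lemma OM_strong:
  assumes om: "is_OM S C" and "X \<in> C" "Y \<in> C" "x \<in> supp X" "x \<in> supp Y" "y \<in> supp X" "y \<notin> supp Y"
  shows "\<exists>Z\<in>C. y \<in> supp Z \<and> x \<notin> supp Z \<and> supp Z \<subseteq> supp X \<union> supp Y"
proof -
  have fin: "finite S" using OM_fin[OF om] .
  have sub: "\<forall>D\<in>supp ` C. D \<subseteq> S" using OM_sub[OF om] by blast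
  have inc: "\<forall>D1\<in>supp ` C. \<forall>D2\<in>supp ` C. D1 \<subseteq> D2 \<longrightarrow> D1 = D2"
  proof (intro ballI impI)
    fix D1 D2 assume "D1 \<in> supp ` C" "D2 \<in> supp ` C" "D1 \<subseteq> D2"
    then obtain X1 X2 where "X1 \<in> C" "X2 \<in> C" "D1 = supp X1" "D2 = supp X2" "supp X1 \<subseteq> supp X2" by blast
    thus "D1 = D2" using OM_incomp[OF om] by simp
  qed
  have weak: "\<forall>D1\<in>supp ` C. \<forall>D2\<in>supp ` C. \<forall>x. D1 \<noteq> D2 \<and> x \<in> D1 \<and> x \<in> D2 \<longrightarrow> (\<exists>D3\<in>supp ` C. D3 \<subseteq> D1 \<union> D2 - {x})"
  proof (intro ballI allI impI)
    fix D1 D2 x assume a: "D1 \<in> supp ` C" "D2 \<in> supp ` C" "D1 \<noteq> D2 \<and> x \<in> D1 \<and> x \<in> D2"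
    then obtain X1 X2 where X: "X1 \<in> C" "X2 \<in> C" "D1 = supp X1" "D2 = supp X2" by blast
    have n: "supp X1 \<noteq> supp X2" and x1: "x \<in> supp X1" and x2: "x \<in> supp X2" using a X by simp_all
    obtain Z where "Z \<in> C" "supp Z \<subseteq> supp X1 \<union> supp X2 - {x}" using OM_weak[OF om X(1,2) n x1 x2] by blast
    thus "\<exists>D3\<in>supp ` C. D3 \<subseteq> D1 \<union> D2 - {x}" using X by blast
  qed
  have XD: "supp X \<in> supp ` C" and YD: "supp Y \<in> supp ` C" using assms(2,3) by blast+
  obtain D3 where D3: "D3 \<in> supp ` C" "y \<in> D3" "x \<notin> D3" "D3 \<subseteq> supp X \<union> supp Y"
    using abstract_strong[OF fin sub inc weak XD YD assms(4,5,6,7)] by blast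
  then obtain Z where "Z \<in> C" "D3 = supp Z" by blast
  thus ?thesis using D3 by blast
qed

lemma hyp_mem: "H \<in> hyperplanes S C \<longleftrightarrow> (\<exists>X\<in>C. H = zset S X)"
  by (auto simp: hyperplanes_def)

lemma mcl_char:
  assumes om: "is_OM S C" and A: "A \<subseteq> S"
  shows "e \<in> mcl S C A \<longleftrightarrow> e \<in> S \<and> (\<forall>X\<in>C. A \<inter> supp X = {} \<longrightarrow> e \<notin> supp X)"
proof -
  have sub: "\<And>X. X \<in> C \<Longrightarrow> supp X \<subseteq> S" using OM_sub[OF om] .
  show ?thesis
  proof
    assume e: "e \<in> mcl S C A"
    hence eS: "e \<in> S" unfolding mcl_def by blast
    have "\<forall>X\<in>C. A \<inter> supp X = {} \<longrightarrow> e \<notin> supp X"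
    proof (intro ballI impI)
      fix X assume X: "X \<in> C" "A \<inter> supp X = {}"
      have H: "zset S X \<in> hyperplanes S C" unfolding hyp_mem using X(1) by blast
      have "A \<subseteq> zset S X" using X A sub[OF X(1)] zset_eq[OF sub[OF X(1)]] by blast
      hence "e \<in> zset S X" using e H unfolding mcl_def by blast
      thus "e \<notin> supp X" using zset_eq[OF sub[OF X(1)]] by blast
    qed
    thus "e \<in> S \<and> (\<forall>X\<in>C. A \<inter> supp X = {} \<longrightarrow> e \<notin> supp X)" using eS by blast
  next
    assume r: "e \<in> S \<and> (\<forall>X\<in>C. A \<inter> supp X = {} \<longrightarrow> e \<notin> supp X)"
    show "e \<in> mcl S C A" unfolding mcl_def
    proof (intro CollectI conjI ballI impI)
      show "e \<in> S" using r by blast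
    next
      fix H assume H: "H \<in> hyperplanes S C" "A \<subseteq> H"
      from H(1) obtain X where X: "X \<in> C" "H = zset S X" unfolding hyp_mem by blast
      have "A \<inter> supp X = {}" using H X zset_eq[OF sub[OF X(1)]] by blast
      thus "e \<in> H" using r X zset_eq[OF sub[OF X(1)]] by blast
    qed
  qed
qed

lemma mcl_mono: "A \<subseteq> B \<Longrightarrow> mcl S C A \<subseteq> mcl S C B"
  unfolding mcl_def by blast

lemma mcl_ext: "A \<subseteq> S \<Longrightarrow> A \<subseteq> mcl S C A"
  unfolding mcl_def by blast

lemma mcl_sub: "mcl S C A \<subseteq> S"
  unfolding mcl_def by blast

lemma mcl_trans: "A \<subseteq> mcl S C B \<Longrightarrow> mcl S C A \<subseteq> mcl S C B"
  unfolding mcl_def by blast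

lemma mcl_exchange:
  assumes om: "is_OM S C" and A: "A \<subseteq> S" and f: "f \<in> S" and e: "e \<in> S"
    and e1: "e \<in> mcl S C (insert f A)" and e2: "e \<notin> mcl S C A"
  shows "f \<in> mcl S C (insert e A)"
proof (rule ccontr)
  assume nf: "f \<notin> mcl S C (insert e A)"
  have "\<not> (\<forall>X\<in>C. A \<inter> supp X = {} \<longrightarrow> e \<notin> supp X)" using e2 mcl_char[OF om A, of e] e by simp
  then obtain X where X: "X \<in> C" "A \<inter> supp X = {}" "e \<in> supp X" by blast
  have AS: "insert f A \<subseteq> S" using A f by blast
  have fX: "f \<in> supp X"
  proof (rule ccontr)
    assume "f \<notin> supp X"
    hence "insert f A \<inter> supp X = {}" using X by blast
    moreover have "\<forall>X\<in>C. insert f A \<inter> supp X = {} \<longrightarrow> e \<notin> supp X" using e1 mcl_char[OF om AS, of e] by simp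
    ultimately show False using X by blast
  qed
  have AS2: "insert e A \<subseteq> S" using A e by blast
  have "\<not> (\<forall>X\<in>C. insert e A \<inter> supp X = {} \<longrightarrow> f \<notin> supp X)" using nf mcl_char[OF om AS2, of f] f by simp
  then obtain Y where Y: "Y \<in> C" "insert e A \<inter> supp Y = {}" "f \<in> supp Y" by blast
  obtain Z where Z: "Z \<in> C" "e \<in> supp Z" "f \<notin> supp Z" "supp Z \<subseteq> supp X \<union> supp Y"
    using OM_strong[OF om X(1) Y(1) fX Y(3) X(3)] Y(2) by blast
  have i: "insert f A \<inter> supp Z = {}" using Z X Y by blast
  have "\<forall>X\<in>C. insert f A \<inter> supp X = {} \<longrightarrow> e \<notin> supp X" using e1 mcl_char[OF om AS, of e] by simp
  thus False using Z i by blast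
qed

lemma mindep_insert:
  assumes om: "is_OM S C" and J: "mindep S C J" and x: "x \<in> S" and nx: "x \<notin> mcl S C J"
  shows "mindep S C (insert x J)"
proof -
  have JS: "J \<subseteq> S" using J unfolding mindep_def by blast
  have xJ: "x \<notin> J" using nx mcl_ext[OF JS] by blast
  show ?thesis unfolding mindep_def
  proof (intro conjI ballI)
    show "insert x J \<subseteq> S" using JS x by blast
  next
    fix y assume y: "y \<in> insert x J"
    show "y \<notin> mcl S C (insert x J - {y})"
    proof (cases "y = x")
      case True
      hence "insert x J - {y} = J" using xJ by blast
      thus ?thesis using nx True by simp
    next
      case False
      hence yJ: "y \<in> J" using y by blast
      have eq: "insert x J - {y} = insert x (J - {y})" using False by blast
      have ny: "y \<notin> mcl S C (J - {y})" using J yJ unfolding mindep_def by blast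
      show ?thesis
      proof
        assume a: "y \<in> mcl S C (insert x J - {y})"
        have a': "y \<in> mcl S C (insert x (J - {y}))" using a eq by simp
        have AJ: "J - {y} \<subseteq> S" using JS by blast
        have yS: "y \<in> S" using JS yJ by blast
        have "x \<in> mcl S C (insert y (J - {y}))" by (rule mcl_exchange[OF om AJ x yS a' ny])
        moreover have "insert y (J - {y}) = J" using yJ by blast
        ultimately show False using nx by simp
      qed
    qed
  qed
qed

lemma mindep_subset: "mindep S C I \<Longrightarrow> J \<subseteq> I \<Longrightarrow> mindep S C J"
proof -
  assume I: "mindep S C I" and JI: "J \<subseteq> I"
  show "mindep S C J" unfolding mindep_def
  proof (intro conjI ballI)
    show "J \<subseteq> S" using I JI unfolding mindep_def by blast
  next
    fix e assume e: "e \<in> J"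
    have "mcl S C (J - {e}) \<subseteq> mcl S C (I - {e})" by (rule mcl_mono) (use JI in blast)
    moreover have "e \<notin> mcl S C (I - {e})" using I e JI unfolding mindep_def by blast
    ultimately show "e \<notin> mcl S C (J - {e})" by blast
  qed
qed

lemma mrank_insert:
  assumes om: "is_OM S C" and T: "T \<subseteq> S" and p: "p \<in> S" "p \<notin> T" and pc: "p \<in> mcl S C T"
  shows "mrank S C (insert p T) = mrank S C T"
proof -
  have fin: "finite S" using OM_fin[OF om] .
  let ?B = "{card I | I. I \<subseteq> insert p T \<and> mindep S C I}"
  let ?A = "{card I | I. I \<subseteq> T \<and> mindep S C I}"
  have finB: "finite ?B"
  proof -
    have s1: "?B \<subseteq> card ` Pow (insert p T)" by blast
    have "insert p T \<subseteq> S" using T p by blast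
    hence "finite (insert p T)" by (rule finite_subset[OF _ fin])
    hence "finite (card ` Pow (insert p T))" by simp
    thus ?thesis by (rule finite_subset[OF s1])
  qed
  have AB: "?A \<subseteq> ?B" by auto
  have finA: "finite ?A" by (rule finite_subset[OF AB finB])
  have e: "mindep S C {}" unfolding mindep_def by simp
  have "card {} \<in> ?A" by (rule CollectI, rule exI[of _ "{}"]) (use e in simp)
  hence neA: "?A \<noteq> {}" by blast
  have BA: "\<forall>b\<in>?B. \<exists>a\<in>?A. b \<le> a"
  proof
    fix b assume "b \<in> ?B"
    then obtain I where I: "b = card I" "I \<subseteq> insert p T" "mindep S C I" by blast
    show "\<exists>a\<in>?A. b \<le> a"
    proof (cases "p \<in> I")
      case False
      hence "card I \<in> ?A" using I by blast
      thus ?thesis by (rule bexI[rotated]) (simp add: I(1))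
    next
      case True
      let ?J = "I - {p}"
      have Jd: "mindep S C ?J" by (rule mindep_subset[OF I(3)]) blast
      have npJ: "p \<notin> mcl S C ?J" using I(3) True unfolding mindep_def by blast
      have "\<exists>x\<in>T. x \<notin> mcl S C ?J"
      proof (rule ccontr)
        assume "\<not> ?thesis"
        hence "T \<subseteq> mcl S C ?J" by blast
        hence "mcl S C T \<subseteq> mcl S C ?J" by (rule mcl_trans)
        thus False using pc npJ by blast
      qed
      then obtain x where x: "x \<in> T" "x \<notin> mcl S C ?J" by blast
      have JS: "?J \<subseteq> S" using Jd unfolding mindep_def by blast
      have xJ: "x \<notin> ?J" using x mcl_ext[OF JS] by blast
      have md: "mindep S C (insert x ?J)" using mindep_insert[OF om Jd _ x(2)] x T by blast
      have sub: "insert x ?J \<subseteq> T" using I x by blast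
      have "I \<subseteq> S" using I(3) unfolding mindep_def by blast
      hence finI: "finite I" by (rule finite_subset[OF _ fin])
      have c1: "card (insert x ?J) = Suc (card ?J)" using xJ finI by simp
      have c2: "card ?J = card I - 1" using True finI by (simp add: card_Diff_singleton)
      have c3: "card I > 0" using True finI card_gt_0_iff by blast
      have eq: "card (insert x ?J) = card I" using c1 c2 c3 by simp
      have mem: "card (insert x ?J) \<in> ?A" using md sub by blast
      show ?thesis by (rule bexI[OF _ mem]) (simp add: I(1) eq)
    qed
  qed
  have "Max ?B = Max ?A"
  proof (rule antisym)
    show "Max ?A \<le> Max ?B" using Max_mono[OF AB neA finB] .
    have neB: "?B \<noteq> {}" using neA AB by blast
    have bB: "Max ?B \<in> ?B" by (rule Max_in[OF finB neB])
    from bspec[OF BA bB] obtain a where a: "a \<in> ?A" "Max ?B \<le> a" by blast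
    have "a \<le> Max ?A" by (rule Max_ge[OF finA a(1)])
    thus "Max ?B \<le> Max ?A" using a(2) by linarith
  qed
  thus ?thesis unfolding mrank_def .
qed

lemma del_cocircuit_exists:
  assumes om: "is_OM S C'" and ZC: "Z \<in> C'" and eZ: "e \<in> supp Z" and ep: "e \<noteq> p"
  shows "\<exists>W \<in> deletion_cocircuits p C'. e \<in> supp W \<and> supp W \<subseteq> supp Z - {p}"
proof -
  have fin: "finite S" using OM_fin[OF om] .
  define P where "P = (\<lambda>Z''. Z'' \<in> C' \<and> e \<in> supp Z'' \<and> supp Z'' - {p} \<subseteq> supp Z - {p})"
  define m where "m = (\<lambda>Z''::'a signvec. card (supp Z'' - {p}))"
  have "P Z" unfolding P_def using ZC eZ by blast
  then obtain Z0 where Z0: "P Z0" and mn: "\<And>Y. P Y \<Longrightarrow> m Z0 \<le> m Y"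
    using ex_has_least_nat[of P Z m] by blast
  have Z0C: "Z0 \<in> C'" and eZ0: "e \<in> supp Z0" and Z0s: "supp Z0 - {p} \<subseteq> supp Z - {p}"
    using Z0 unfolding P_def by blast+
  have finZ0: "finite (supp Z0 - {p})"
  proof -
    have "supp Z0 - {p} \<subseteq> S" using OM_sub[OF om Z0C] by blast
    thus ?thesis by (rule finite_subset[OF _ fin])
  qed
  have sd: "supp (delp p Z0) = supp Z0 - {p}" by (rule supp_delp)
  have mem: "delp p Z0 \<in> deletion_cocircuits p C'"
    unfolding deletion_cocircuits_def
  proof (intro CollectI conjI ballI impI)
    show "delp p Z0 \<in> delp p ` C'" using Z0C by (rule imageI)
    show "delp p Z0 \<noteq> zerovec"
    proof
      assume "delp p Z0 = zerovec"
      hence "supp (delp p Z0) = {}" by (simp add: supp_empty_iff)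
      thus False using eZ0 ep sd by blast
    qed
  next
    fix W assume W: "W \<in> delp p ` C'" "W \<noteq> zerovec" "supp W \<subseteq> supp (delp p Z0)"
    from W(1) obtain Z3 where Z3: "Z3 \<in> C'" "W = delp p Z3" by blast
    have sW: "supp W = supp Z3 - {p}" using Z3(2) supp_delp by simp
    show "supp W = supp (delp p Z0)"
    proof (cases "e \<in> supp W")
      case True
      have "P Z3" unfolding P_def using Z3(1) True sW W(3) sd Z0s by blast
      hence "m Z0 \<le> m Z3" by (rule mn)
      hence "card (supp Z0 - {p}) \<le> card (supp W)" unfolding m_def using sW by simp
      moreover have "supp W \<subseteq> supp Z0 - {p}" using W(3) sd by simp
      ultimately show ?thesis using card_seteq[OF finZ0] sd by blast
    next
      case False
      have "supp W \<noteq> {}" using W(2) by (simp add: supp_empty_iff)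
      then obtain f where f: "f \<in> supp W" by blast
      have fp: "f \<noteq> p" and f3: "f \<in> supp Z3" using f sW by blast+
      have f0: "f \<in> supp Z0" using f W(3) sd by blast
      have e3: "e \<notin> supp Z3" using False sW ep by blast
      obtain Z4 where Z4: "Z4 \<in> C'" "e \<in> supp Z4" "f \<notin> supp Z4" "supp Z4 \<subseteq> supp Z0 \<union> supp Z3"
        using OM_strong[OF om Z0C Z3(1) f0 f3 eZ0 e3] by blast
      have s4: "supp Z4 - {p} \<subseteq> supp Z0 - {p} - {f}" using Z4 W(3) sd sW by blast
      have "P Z4" unfolding P_def using Z4 s4 Z0s by blast
      hence le: "m Z0 \<le> m Z4" by (rule mn)
      have "supp Z4 - {p} \<subset> supp Z0 - {p}" using s4 f0 fp by blast
      hence "m Z4 < m Z0" unfolding m_def by (rule psubset_card_mono[OF finZ0])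
      thus ?thesis using le by simp
    qed
  qed
  show ?thesis
    by (rule bexI[OF _ mem]) (use eZ0 ep sd Z0s in blast)
qed

lemma mcl_char0:
  assumes sub: "\<And>X. X \<in> C \<Longrightarrow> supp X \<subseteq> S" and A: "A \<subseteq> S"
  shows "e \<in> mcl S C A \<longleftrightarrow> e \<in> S \<and> (\<forall>X\<in>C. A \<inter> supp X = {} \<longrightarrow> e \<notin> supp X)"
proof
  assume e: "e \<in> mcl S C A"
  hence eS: "e \<in> S" unfolding mcl_def by blast
  have "\<forall>X\<in>C. A \<inter> supp X = {} \<longrightarrow> e \<notin> supp X"
  proof (intro ballI impI)
    fix X assume X: "X \<in> C" "A \<inter> supp X = {}"
    have H: "zset S X \<in> hyperplanes S C" unfolding hyp_mem using X(1) by blast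
    have "A \<subseteq> zset S X" using X A sub[OF X(1)] zset_eq[OF sub[OF X(1)]] by blast
    hence "e \<in> zset S X" using e H unfolding mcl_def by blast
    thus "e \<notin> supp X" using zset_eq[OF sub[OF X(1)]] by blast
  qed
  thus "e \<in> S \<and> (\<forall>X\<in>C. A \<inter> supp X = {} \<longrightarrow> e \<notin> supp X)" using eS by blast
next
  assume r: "e \<in> S \<and> (\<forall>X\<in>C. A \<inter> supp X = {} \<longrightarrow> e \<notin> supp X)"
  show "e \<in> mcl S C A" unfolding mcl_def
  proof (intro CollectI conjI ballI impI)
    show "e \<in> S" using r by blast
  next
    fix H assume H: "H \<in> hyperplanes S C" "A \<subseteq> H"
    from H(1) obtain X where X: "X \<in> C" "H = zset S X" unfolding hyp_mem by blast
    have "A \<inter> supp X = {}" using H X zset_eq[OF sub[OF X(1)]] by blast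
    thus "e \<in> H" using r X zset_eq[OF sub[OF X(1)]] by blast
  qed
qed

lemma delcoc_form: "V \<in> deletion_cocircuits p C' \<Longrightarrow> \<exists>Z\<in>C'. V = delp p Z"
  unfolding deletion_cocircuits_def by blast

lemma mcl_agree:
  assumes om: "is_OM (insert p E) C'" and Cd: "deletion_cocircuits p C' = C" and pE: "p \<notin> E"
    and B: "B \<subseteq> E" and e: "e \<in> E"
  shows "e \<in> mcl E C B \<longleftrightarrow> e \<in> mcl (insert p E) C' B"
proof -
  have subC: "\<And>V. V \<in> C \<Longrightarrow> supp V \<subseteq> E"
  proof -
    fix V assume "V \<in> C"
    hence "V \<in> deletion_cocircuits p C'" using Cd by simp
    from delcoc_form[OF this] obtain Z where Z: "Z \<in> C'" "V = delp p Z" by blast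
    have "supp Z \<subseteq> insert p E" by (rule OM_sub[OF om Z(1)])
    moreover have "supp V = supp Z - {p}" by (simp add: Z(2) supp_delp)
    ultimately show "supp V \<subseteq> E" by blast
  qed
  have B': "B \<subseteq> insert p E" using B by blast
  have c1: "e \<in> mcl E C B \<longleftrightarrow> (\<forall>X\<in>C. B \<inter> supp X = {} \<longrightarrow> e \<notin> supp X)"
    using mcl_char0[OF subC B, where e=e] e by simp
  have c2: "e \<in> mcl (insert p E) C' B \<longleftrightarrow> (\<forall>X\<in>C'. B \<inter> supp X = {} \<longrightarrow> e \<notin> supp X)"
    using mcl_char[OF om B', of e] e by simp
  have ep: "e \<noteq> p" using e pE by blast
  have "(\<forall>X\<in>C. B \<inter> supp X = {} \<longrightarrow> e \<notin> supp X) \<longleftrightarrow> (\<forall>X\<in>C'. B \<inter> supp X = {} \<longrightarrow> e \<notin> supp X)"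
  proof
    assume L: "\<forall>X\<in>C. B \<inter> supp X = {} \<longrightarrow> e \<notin> supp X"
    show "\<forall>X\<in>C'. B \<inter> supp X = {} \<longrightarrow> e \<notin> supp X"
    proof (intro ballI impI notI)
      fix Z assume Z: "Z \<in> C'" "B \<inter> supp Z = {}" "e \<in> supp Z"
      obtain W where W: "W \<in> deletion_cocircuits p C'" "e \<in> supp W" "supp W \<subseteq> supp Z - {p}"
        using del_cocircuit_exists[OF om Z(1) Z(3) ep] by blast
      have "W \<in> C" using W(1) Cd by simp
      moreover have "B \<inter> supp W = {}" using W(3) Z(2) by blast
      ultimately show False using L W(2) by blast
    qed
  next
    assume R: "\<forall>X\<in>C'. B \<inter> supp X = {} \<longrightarrow> e \<notin> supp X"
    show "\<forall>X\<in>C. B \<inter> supp X = {} \<longrightarrow> e \<notin> supp X"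
    proof (intro ballI impI)
      fix V assume V: "V \<in> C" "B \<inter> supp V = {}"
      have "V \<in> deletion_cocircuits p C'" using Cd V(1) by simp
      from delcoc_form[OF this] obtain Z where Z: "Z \<in> C'" "V = delp p Z" by blast
      have sV: "supp V = supp Z - {p}" using Z(2) supp_delp by simp
      have "B \<inter> supp Z = {}" using V(2) sV B pE by blast
      hence "e \<notin> supp Z" using R Z(1) by blast
      thus "e \<notin> supp V" using sV by blast
    qed
  qed
  thus ?thesis using c1 c2 by simp
qed

lemma mindep_agree:
  assumes om: "is_OM (insert p E) C'" and Cd: "deletion_cocircuits p C' = C" and pE: "p \<notin> E"
    and I: "I \<subseteq> E"
  shows "mindep E C I \<longleftrightarrow> mindep (insert p E) C' I"
proof -
  have "\<forall>e\<in>I. (e \<in> mcl E C (I - {e}) \<longleftrightarrow> e \<in> mcl (insert p E) C' (I - {e}))"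
  proof
    fix e assume "e \<in> I"
    hence "e \<in> E" using I by blast
    moreover have "I - {e} \<subseteq> E" using I by blast
    ultimately show "e \<in> mcl E C (I - {e}) \<longleftrightarrow> e \<in> mcl (insert p E) C' (I - {e})"
      using mcl_agree[OF om Cd pE] by blast
  qed
  moreover have "I \<subseteq> insert p E" using I by blast
  ultimately show ?thesis unfolding mindep_def using I by auto
qed

lemma mrank_agree:
  assumes om: "is_OM (insert p E) C'" and Cd: "deletion_cocircuits p C' = C" and pE: "p \<notin> E"
    and T: "T \<subseteq> E"
  shows "mrank E C T = mrank (insert p E) C' T"
proof -
  have "{card I | I. I \<subseteq> T \<and> mindep E C I} = {card I | I. I \<subseteq> T \<and> mindep (insert p E) C' I}"
  proof -
    have eq: "mindep E C I \<longleftrightarrow> mindep (insert p E) C' I" if "I \<subseteq> T" for I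
      by (rule mindep_agree[OF om Cd pE]) (use that T in blast)
    show ?thesis by (rule Collect_cong) (use eq in blast)
  qed
  thus ?thesis unfolding mrank_def by simp
qed

lemma hyp_flat:
  assumes sub: "\<And>X. X \<in> C \<Longrightarrow> supp X \<subseteq> E" and V1: "V1 \<in> C" and V2: "V2 \<in> C"
  shows "is_flat E C (zset E V1 \<inter> zset E V2)"
  unfolding is_flat_def
proof (intro conjI)
  show S: "zset E V1 \<inter> zset E V2 \<subseteq> E" unfolding zset_def by blast
  show "mcl E C (zset E V1 \<inter> zset E V2) = zset E V1 \<inter> zset E V2"
  proof
    have H1: "zset E V1 \<in> hyperplanes E C" unfolding hyp_mem using V1 by blast
    have H2: "zset E V2 \<in> hyperplanes E C" unfolding hyp_mem using V2 by blast
    show "mcl E C (zset E V1 \<inter> zset E V2) \<subseteq> zset E V1 \<inter> zset E V2"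
      unfolding mcl_def using H1 H2 by blast
    show "zset E V1 \<inter> zset E V2 \<subseteq> mcl E C (zset E V1 \<inter> zset E V2)" by (rule mcl_ext[OF S])
  qed
qed

lemma old_hyp_p:
  assumes om: "is_OM (insert p E) C'" and Cd: "deletion_cocircuits p C' = C" and pE: "p \<notin> E"
    and subC: "\<And>V. V \<in> C \<Longrightarrow> supp V \<subseteq> E"
    and pc: "p \<in> mcl (insert p E) C' E"
    and XC: "X \<in> C'" and dX: "delp p X \<in> C" and Xp: "X p = Zer"
  shows "p \<in> mcl (insert p E) C' (zset E (delp p X))"
proof -
  let ?H = "zset E (delp p X)"
  have HS: "?H \<subseteq> insert p E" unfolding zset_def by blast
  have sX: "supp (delp p X) = supp X" using Xp by (auto simp: supp_def delp_def)
  have Heq: "?H = E - supp X" using zset_eq[OF subC[OF dX]] sX by simp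
  have "\<forall>Z\<in>C'. ?H \<inter> supp Z = {} \<longrightarrow> p \<notin> supp Z"
  proof (intro ballI impI notI)
    fix Z assume Z: "Z \<in> C'" "?H \<inter> supp Z = {}" "p \<in> supp Z"
    have sZ: "supp Z \<subseteq> insert p E" by (rule OM_sub[OF om Z(1)])
    have sZX: "supp Z - {p} \<subseteq> supp X" using Z(2) sZ Heq by blast
    show False
    proof (cases "supp Z - {p} = {}")
      case True
      have EZ: "E \<inter> supp Z = {}" using True pE by blast
      have "E \<subseteq> insert p E" by blast
      hence "p \<in> insert p E \<and> (\<forall>X\<in>C'. E \<inter> supp X = {} \<longrightarrow> p \<notin> supp X)"
        using pc mcl_char[OF om, where e=p] by blast
      thus False using Z(1,3) EZ by blast
    next
      case False
      have dZ: "delp p Z \<in> delp p ` C'" using Z(1) by (rule imageI)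
      have sdZ: "supp (delp p Z) = supp Z - {p}" by (rule supp_delp)
      have nz: "delp p Z \<noteq> zerovec"
      proof
        assume "delp p Z = zerovec"
        hence "supp (delp p Z) = {}" by (simp add: supp_empty_iff)
        thus False using False sdZ by simp
      qed
      have "delp p X \<in> deletion_cocircuits p C'" using dX Cd by simp
      hence minX: "\<forall>W \<in> delp p ` C'. W \<noteq> zerovec \<longrightarrow> supp W \<subseteq> supp (delp p X) \<longrightarrow> supp W = supp (delp p X)"
        unfolding deletion_cocircuits_def by blast
      have "supp (delp p Z) = supp (delp p X)" using minX dZ nz sdZ sZX sX by blast
      hence "supp X \<subseteq> supp Z" using sdZ sX by blast
      hence "X = Z \<or> X = negv Z" by (rule OM_pm[OF om XC Z(1)])
      moreover have "Z p \<noteq> Zer" using Z(3) unfolding supp_def by blast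
      ultimately show False using Xp by (auto simp: negv_def elim: negsign.elims)
    qed
  qed
  moreover have "p \<in> insert p E" by blast
  ultimately show ?thesis using mcl_char[OF om HS, where e=p] by simp
qed

theorem proposition3p3:
  fixes E :: "'a set" and C C' :: "'a signvec set" and g f p :: 'a and X Y :: "'a signvec"
  assumes prog: "om_program E C g f"
    and ext: "single_elem_ext E C p C'"
    and nontriv: "\<not> is_coloop (insert p E) C' p"
    and oldX: "old_cocircuit C p C' X"
    and oldY: "old_cocircuit C p C' Y"
    and conf: "conformal X Y"
    and comod: "comodular (insert p E) C' X Y"
    and Xg: "X g = Pos" and Yg: "Y g = Pos"
  shows "delp p X \<in> C \<and> delp p Y \<in> C \<and> conformal (delp p X) (delp p Y) \<and>
         delp p X g = Pos \<and> delp p Y g = Pos \<and>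
         ((comp X Y p \<noteq> Zer \<or> principal_ext E C p C') \<longrightarrow>
            comodular E C (delp p X) (delp p Y))"
proof -
  have omC: "is_OM E C" and gE: "g \<in> E" using prog unfolding om_program_def by blast+
  have pE: "p \<notin> E" and om: "is_OM (insert p E) C'" and Cd: "deletion_cocircuits p C' = C"
    using ext unfolding single_elem_ext_def by blast+
  have XC: "X \<in> C'" and dX: "delp p X \<in> C" using oldX unfolding old_cocircuit_def by blast+
  have YC: "Y \<in> C'" and dY: "delp p Y \<in> C" using oldY unfolding old_cocircuit_def by blast+
  have gp: "g \<noteq> p" using gE pE by blast
  have dXg: "delp p X g = Pos" using Xg gp by (simp add: delp_def)
  have dYg: "delp p Y g = Pos" using Yg gp by (simp add: delp_def)
  have confd: "conformal (delp p X) (delp p Y)"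
    using conf unfolding conformal_def sep_def delp_def by auto
  have subC: "\<And>V. V \<in> C \<Longrightarrow> supp V \<subseteq> E" using OM_sub[OF omC] .
  have pc: "p \<in> mcl (insert p E) C' E"
  proof -
    have "insert p E - {p} = E" using pE by blast
    thus ?thesis using nontriv unfolding is_coloop_def by simp
  qed
  have comodd: "comodular E C (delp p X) (delp p Y)" if hyp: "comp X Y p \<noteq> Zer \<or> principal_ext E C p C'"
  proof -
    have XnY: "X \<noteq> Y" and XnnY: "X \<noteq> negv Y" and edge: "is_edge (insert p E) C' (comp X Y)"
      using comod unfolding comodular_def by blast+
    have n2: "delp p X \<noteq> negv (delp p Y)"
    proof
      assume "delp p X = negv (delp p Y)"
      hence "delp p X g = negsign (delp p Y g)" by (simp add: negv_def)
      thus False using dXg dYg by simp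
    qed
    have n1: "delp p X \<noteq> delp p Y"
    proof
      assume eq: "delp p X = delp p Y"
      have Xe: "X e = Y e" if "e \<noteq> p" for e
        using fun_cong[OF eq, of e] that by (simp add: delp_def)
      have nsep: "p \<notin> sep X Y" using conf unfolding conformal_def by blast
      show False
      proof (cases "X p = Zer")
        case True
        have "supp X \<subseteq> supp Y"
        proof
          fix e assume "e \<in> supp X"
          hence ne: "X e \<noteq> Zer" by (simp add: supp_def)
          hence "e \<noteq> p" using True by auto
          hence "X e = Y e" by (rule Xe)
          thus "e \<in> supp Y" using ne by (simp add: supp_def)
        qed
        hence "X = Y \<or> X = negv Y" by (rule OM_pm[OF om XC YC])
        thus False using XnY XnnY by blast
      next
        case False
        show False
        proof (cases "Y p = Zer")
          case True
          have "supp Y \<subseteq> supp X"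
        proof
          fix e assume "e \<in> supp Y"
          hence ne: "Y e \<noteq> Zer" by (simp add: supp_def)
          hence "e \<noteq> p" using True by auto
          hence "X e = Y e" by (rule Xe)
          thus "e \<in> supp X" using ne by (simp add: supp_def)
        qed
          hence "Y = X \<or> Y = negv X" by (rule OM_pm[OF om YC XC])
          moreover have "Y \<noteq> negv X"
          proof
            assume "Y = negv X"
            hence "Y g = negsign (X g)" by (simp add: negv_def)
            thus False using Xg Yg by simp
          qed
          ultimately show False using XnY by blast
        next
          case False2: False
          have "X p \<noteq> Y p"
          proof
            assume pp: "X p = Y p"
            have "X = Y"
            proof (rule HOL.ext)
              fix e show "X e = Y e" using pp Xe by (cases "e = p") auto
            qed
            thus False using XnY by blast
          qed
          thus False using False False2 nsep unfolding sep_def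
            by (cases "X p"; cases "Y p") auto
        qed
      qed
    qed
    define V where "V = comp (delp p X) (delp p Y)"
    have covV: "V \<in> covectors C"
    proof -
      have "delp p Y = comp (delp p Y) zerovec" by (simp add: comp_def zerovec_def fun_eq_iff)
      moreover have "comp (delp p Y) zerovec \<in> covectors C" by (rule covectors.cov_comp[OF dY covectors.cov_zero])
      ultimately have "delp p Y \<in> covectors C" by simp
      thus ?thesis unfolding V_def by (rule covectors.cov_comp[OF dX])
    qed
    have zV: "zset E V = zset E (delp p X) \<inter> zset E (delp p Y)"
      unfolding V_def zset_def comp_def by auto
    have flatV: "is_flat E C (zset E V)" using hyp_flat[OF subC dX dY] zV by simp
    define F where "F = zset E V"
    have FE: "F \<subseteq> E" unfolding F_def zset_def by blast
    have F'eq: "zset (insert p E) (comp X Y) - {p} = F"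
      unfolding F_def V_def zset_def comp_def delp_def using pE by auto
    have r1: "mrank E C F = mrank (insert p E) C' F" by (rule mrank_agree[OF om Cd pE FE])
    have r2: "om_rank E C = om_rank (insert p E) C'"
    proof -
      have "om_rank E C = mrank (insert p E) C' E" unfolding om_rank_def by (rule mrank_agree[OF om Cd pE]) simp
      also have "\<dots> = mrank (insert p E) C' (insert p E)"
        by (rule mrank_insert[OF om _ _ pE pc, symmetric]) auto
      finally show ?thesis unfolding om_rank_def .
    qed
    have r3: "mrank (insert p E) C' (zset (insert p E) (comp X Y)) = mrank (insert p E) C' F"
    proof (cases "comp X Y p = Zer")
      case False
      hence "zset (insert p E) (comp X Y) = F" using F'eq unfolding zset_def by blast
      thus ?thesis by simp
    next
      case True
      hence pr: "principal_ext E C p C'" using hyp by blast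
      have Xp: "X p = Zer" and Yp: "Y p = Zer" using True unfolding comp_def by (auto split: if_splits)
      from pr obtain A where A: "is_flat E C A"
        and Aprop: "\<forall>F. is_flat E C F \<longrightarrow> (p \<in> mcl (insert p E) C' F \<longleftrightarrow> A \<subseteq> F)"
        unfolding principal_ext_def by blast
      have fX: "is_flat E C (zset E (delp p X))" using hyp_flat[OF subC dX dX] by simp
      have fY: "is_flat E C (zset E (delp p Y))" using hyp_flat[OF subC dY dY] by simp
      have pX: "p \<in> mcl (insert p E) C' (zset E (delp p X))" by (rule old_hyp_p[OF om Cd pE subC pc XC dX Xp])
      have pY: "p \<in> mcl (insert p E) C' (zset E (delp p Y))" by (rule old_hyp_p[OF om Cd pE subC pc YC dY Yp])
      have "A \<subseteq> zset E (delp p X)" using Aprop fX pX by blast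
      moreover have "A \<subseteq> zset E (delp p Y)" using Aprop fY pY by blast
      ultimately have "A \<subseteq> F" unfolding F_def zV by blast
      moreover have "is_flat E C F" unfolding F_def by (rule flatV)
      ultimately have pF: "p \<in> mcl (insert p E) C' F" using Aprop by blast
      have "p \<in> zset (insert p E) (comp X Y)" using True unfolding zset_def by blast
      hence "zset (insert p E) (comp X Y) = insert p F" using F'eq by blast
      moreover have "mrank (insert p E) C' (insert p F) = mrank (insert p E) C' F"
        by (rule mrank_insert[OF om _ _ _ pF]) (use FE pE in auto)
      ultimately show ?thesis by simp
    qed
    have rk: "int (mrank (insert p E) C' (zset (insert p E) (comp X Y))) = int (om_rank (insert p E) C') - 2"
      using edge unfolding is_edge_def by blast
    have "int (mrank E C (zset E V)) = int (om_rank E C) - 2"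
      using rk r1 r2 r3 unfolding F_def by simp
    hence edgeV: "is_edge E C V" unfolding is_edge_def using covV flatV by blast
    show ?thesis unfolding comodular_def using dX dY n1 n2 edgeV unfolding V_def by blast
  qed
  show ?thesis using dX dY confd dXg dYg comodd by blast
qed

end
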